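(* Let $n \geq 1$, $i \in \mathbb{Z}_{\geq 1}$ and $B \subseteq [n]$. Then $\mathrm{Cons}(V_B, i) = \mathrm{Gov}(V_B, i)$.
   Context: $V_{[n]} = \mathbb{F}_2^n$ with basis $e_1,\dots,e_n$ and dual basis $\chi_1,\dots,\chi_n$. For $C \subseteq [n]$ and $i \geq 1$, $\widetilde{\mathrm{Multi}}(V_C, i)$ is the span (inside the space of multilinear maps $V_{[n]}^i \to \mathbb{F}_2$) of $\chi_{\tau(1)}\otimes\cdots\otimes\chi_{\tau(i)}$ over injective maps $\tau: \{1,\dots,i\} \to C$, where $(\chi_{h_1}\otimes\cdots\otimes\chi_{h_i})(\sigma_1,\dots,\sigma_i) = \prod_s\chi_{h_s}(\sigma_s)$. For $b \in \widetilde{\mathrm{Multi}}(V_C,i)$ and $j \in C$, $b(e_j, -)$ lies in $\widetilde{\mathrm{Multi}}(V_{C\setminus\{j\}}, i-1)$. Consistent tensors $\mathrm{Cons}(V_C, i) \subseteq \widetilde{\mathrm{Multi}}(V_C,i)$ are defined recursively: $\mathrm{Cons}(V_C,1)$ is the span of $\{\chi_x : x \in C\}$; $\mathrm{Cons}(V_C,2)$ consists of the $b$ with $b(\sigma_1,\sigma_2) = b(\sigma_2,\sigma_1)$ for all $\sigma_1,\sigma_2$; $\mathrm{Cons}(V_C,3)$ consists of the $b$ such that $b(e_j,-) \in \mathrm{Cons}(V_{C\setminus\{j\}},2)$ for all $j \in C$ and $b(\sigma_1,\sigma_2,\sigma_3)+b(\sigma_3,\sigma_1,\sigma_2)+b(\sigma_2,\sigma_3,\sigma_1)=0$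 for all $\sigma_1,\sigma_2,\sigma_3 \in \{e_1,\dots,e_n\}$; for $i \geq 4$, $\mathrm{Cons}(V_C,i)$ consists of the $b$ such that $b(e_j,-) \in \mathrm{Cons}(V_{C\setminus\{j\}}, i-1)$ for all $j \in C$ and $b(e_{j_1}, e_{j_2}, -) = b(e_{j_2}, e_{j_1}, -)$ for all distinct $j_1, j_2 \in C$. Governing tensors: for $A \subseteq [n]$ with $\#A = i \geq 2$ and $x \in A$, $\phi_{(A,x)} = \sum_\tau \chi_{\tau(1)}\otimes\cdots\otimes\chi_{\tau(i)}$ over bijections $\tau:\{1,\dots,i\}\to A$ with $\tau(i-1)=x$ or $\tau(i)=x$; for $A=\{x\}$, $\phi_{(A,x)} = \chi_x$. $\mathrm{Gov}(V_C, i)$ is the span of $\phi_{(A,x)}$ over $A \subseteq C$ with $\#A = i$ and $x \in A$. *)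

theory Defs
  imports Main "HOL-Library.Z2"
begin

text \<open>Vectors of V_[n] = F_2^n are functions nat => bit supported on {1..n}.
  A multilinear map V_[n]^i -> F_2 is a function on lists of vectors (of length i).\<close>

type_synonym vec = "nat \<Rightarrow> bit"
type_synonym mmap = "vec list \<Rightarrow> bit"

definition Vn :: "nat \<Rightarrow> vec set" where
  "Vn n = {\<sigma>. \<forall>k. k \<notin> {1..n} \<longrightarrow> \<sigma> k = 0}"

definition ebasis :: "nat \<Rightarrow> vec" where
  "ebasis j = (\<lambda>k. if k = j then 1 else 0)"

definition chi_tensor :: "nat list \<Rightarrow> mmap" where
  "chi_tensor hs = (\<lambda>\<sigma>s. \<Prod>s<length hs. (\<sigma>s ! s) (hs ! s))"

definition F2span :: "mmap set \<Rightarrow> mmap set" where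
  "F2span G = {(\<lambda>\<sigma>s. \<Sum>t\<in>S. t \<sigma>s) | S. finite S \<and> S \<subseteq> G}"

text \<open>tau : {1..i} -> C injective, represented by the list [tau 1, ..., tau i].\<close>
definition MultiT :: "nat set \<Rightarrow> nat \<Rightarrow> mmap set" where
  "MultiT C i = F2span {chi_tensor hs | hs. length hs = i \<and> distinct hs \<and> set hs \<subseteq> C}"

definition papp :: "mmap \<Rightarrow> nat \<Rightarrow> mmap" where
  "papp b j = (\<lambda>\<sigma>s. b (ebasis j # \<sigma>s))"

fun ConsT :: "nat \<Rightarrow> nat set \<Rightarrow> nat \<Rightarrow> mmap set" where
  "ConsT n C 0 = {}"
| "ConsT n C (Suc 0) = F2span {chi_tensor [x] | x. x \<in> C}"
| "ConsT n C (Suc (Suc 0)) = {b \<in> MultiT C 2.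
     \<forall>\<sigma>1 \<in> Vn n. \<forall>\<sigma>2 \<in> Vn n. b [\<sigma>1, \<sigma>2] = b [\<sigma>2, \<sigma>1]}"
| "ConsT n C (Suc (Suc (Suc 0))) = {b \<in> MultiT C 3.
     (\<forall>j \<in> C. papp b j \<in> ConsT n (C - {j}) 2) \<and>
     (\<forall>\<sigma>1 \<in> ebasis ` {1..n}. \<forall>\<sigma>2 \<in> ebasis ` {1..n}. \<forall>\<sigma>3 \<in> ebasis ` {1..n}.
        b [\<sigma>1, \<sigma>2, \<sigma>3] + b [\<sigma>3, \<sigma>1, \<sigma>2] + b [\<sigma>2, \<sigma>3, \<sigma>1] = 0)}"
| "ConsT n C (Suc (Suc (Suc (Suc k)))) = {b \<in> MultiT C (Suc (Suc (Suc (Suc k)))).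
     (\<forall>j \<in> C. papp b j \<in> ConsT n (C - {j}) (Suc (Suc (Suc k)))) \<and>
     (\<forall>j1 \<in> C. \<forall>j2 \<in> C. j1 \<noteq> j2 \<longrightarrow> papp (papp b j1) j2 = papp (papp b j2) j1)}"

text \<open>phi_(A,x): sum over bijections tau : {1..i} -> A (lists hs) with
  tau(i-1) = x or tau(i) = x (0-based positions i-2, i-1); phi_({x},x) = chi_x.\<close>
definition phi :: "nat set \<Rightarrow> nat \<Rightarrow> mmap" where
  "phi A x = (if card A = 1 then chi_tensor [x] else
     (\<lambda>\<sigma>s. \<Sum>hs \<in> {hs. distinct hs \<and> set hs = A \<and>
        (hs ! (card A - 2) = x \<or> hs ! (card A - 1) = x)}. chi_tensor hs \<sigma>s))"

definition Gov :: "nat set \<Rightarrow> nat \<Rightarrow> mmap set" where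
  "Gov C i = F2span {phi A x | A x. A \<subseteq> C \<and> card A = i \<and> x \<in> A}"

end

theory Submission
  imports Defs "HOL-Library.Z2"
begin


declare add_bit_eq_xor[simp del] mult_bit_eq_and[simp del]

lemma bit_add_self[simp]: "(x::bit) + x = 0"
  by (cases x) simp_all

lemma bit_cases01: "(x::bit) = 0 \<or> x = 1" by (cases x) simp_all

definition W :: "nat set \<Rightarrow> nat \<Rightarrow> nat list set" where
  "W C i = {w. length w = i \<and> distinct w \<and> set w \<subseteq> C}"

definition coef :: "mmap \<Rightarrow> nat list \<Rightarrow> bit" where
  "coef b w = b (map ebasis w)"

definition lin :: "nat set \<Rightarrow> nat \<Rightarrow> (nat list \<Rightarrow> bit) \<Rightarrow> mmap" where
  "lin C i c = (\<lambda>\<sigma>s. \<Sum>w\<in>W C i. c w * chi_tensor w \<sigma>s)"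

definition L2 :: "nat list \<Rightarrow> nat set" where
  "L2 w = set (drop (length w - 2) w)"

lemma finite_W: "finite C \<Longrightarrow> finite (W C i)"
proof -
  assume "finite C"
  have "W C i \<subseteq> {w. set w \<subseteq> C \<and> length w = i}" by (auto simp: W_def)
  then show ?thesis using finite_lists_length_eq[OF \<open>finite C\<close>] finite_subset by blast
qed

lemma W_Cons: "(j # w \<in> W C (Suc k)) \<longleftrightarrow> j \<in> C \<and> w \<in> W (C - {j}) k"
  by (auto simp: W_def)

lemma W_Nil: "([] \<in> W C k) \<longleftrightarrow> k = 0"
  by (auto simp: W_def)

lemma chi_Nil[simp]: "chi_tensor [] \<sigma>s = 1"
  by (simp add: chi_tensor_def)

lemma chi_Cons[simp]: "chi_tensor (a # w) (\<sigma> # \<sigma>s) = \<sigma> a * chi_tensor w \<sigma>s"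
  unfolding chi_tensor_def length_Cons prod.lessThan_Suc_shift by simp

lemma ebasis_app: "ebasis j a = (if a = j then 1 else 0)"
  by (simp add: ebasis_def)

lemma chi_basis: "length w' = length w \<Longrightarrow>
   chi_tensor w' (map ebasis w) = (if w' = w then 1 else 0)"
proof (induction w' arbitrary: w)
  case Nil then show ?case by simp
next
  case (Cons a w')
  then obtain b v where w: "w = b # v" and "length w' = length v" by (cases w) auto
  with Cons.IH show ?case by (auto simp: w ebasis_app)
qed

lemma coef_lin: "finite C \<Longrightarrow> length w = i \<Longrightarrow>
   coef (lin C i c) w = (if w \<in> W C i then c w else 0)"
proof -
  assume f: "finite C" and l: "length w = i"
  have "coef (lin C i c) w = (\<Sum>w'\<in>W C i. c w' * (if w' = w then 1 else 0))"
    unfolding coef_def lin_def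
    by (rule sum.cong) (auto simp: chi_basis l W_def)
  also have "\<dots> = (\<Sum>w'\<in>W C i. if w' = w then c w' else 0)"
    by (rule sum.cong) auto
  also have "\<dots> = (if w \<in> W C i then c w else 0)"
    using finite_W[OF f] by (simp add: sum.delta')
  finally show ?thesis .
qed

lemma F2span_zero: "(\<lambda>\<sigma>s. 0) \<in> F2span G"
  unfolding F2span_def by (rule CollectI, rule exI[of _ "{}"]) simp

lemma F2span_gen: "g \<in> G \<Longrightarrow> g \<in> F2span G"
  unfolding F2span_def by (rule CollectI, rule exI[of _ "{g}"]) simp

lemma sum_xor_split:
  fixes f :: "'a \<Rightarrow> bit"
  assumes "finite S1" "finite S2"
  shows "sum f S1 + sum f S2 = sum f ((S1 - S2) \<union> (S2 - S1))"
proof -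
  have a: "sum f S1 = sum f (S1 \<inter> S2) + sum f (S1 - S2)"
    using assms by (simp add: sum.Int_Diff)
  have b: "sum f S2 = sum f (S1 \<inter> S2) + sum f (S2 - S1)"
    using assms sum.Int_Diff[of S2 f S1] by (simp add: Int_commute)
  have c: "sum f ((S1 - S2) \<union> (S2 - S1)) = sum f (S1 - S2) + sum f (S2 - S1)"
    using assms by (intro sum.union_disjoint) auto
  have "sum f S1 + sum f S2 = (sum f (S1 \<inter> S2) + sum f (S1 \<inter> S2)) + (sum f (S1 - S2) + sum f (S2 - S1))"
    unfolding a b by (simp add: ac_simps)
  then show ?thesis using c by simp
qed

lemma F2span_add: "b1 \<in> F2span G \<Longrightarrow> b2 \<in> F2span G \<Longrightarrow> (\<lambda>\<sigma>s. b1 \<sigma>s + b2 \<sigma>s) \<in> F2span G"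
proof -
  assume "b1 \<in> F2span G" "b2 \<in> F2span G"
  then obtain S1 S2 where s1: "finite S1" "S1 \<subseteq> G" "b1 = (\<lambda>\<sigma>s. \<Sum>t\<in>S1. t \<sigma>s)"
    and s2: "finite S2" "S2 \<subseteq> G" "b2 = (\<lambda>\<sigma>s. \<Sum>t\<in>S2. t \<sigma>s)"
    unfolding F2span_def by blast
  have "(\<lambda>\<sigma>s. b1 \<sigma>s + b2 \<sigma>s) = (\<lambda>\<sigma>s. \<Sum>t\<in>(S1 - S2) \<union> (S2 - S1). t \<sigma>s)"
    using s1 s2 by (simp add: sum_xor_split)
  moreover have "finite ((S1 - S2) \<union> (S2 - S1))" "(S1 - S2) \<union> (S2 - S1) \<subseteq> G" using s1 s2 by auto
  ultimately show ?thesis unfolding F2span_def by blast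
qed

lemma F2span_sum: "finite I \<Longrightarrow> (\<And>k. k \<in> I \<Longrightarrow> f k \<in> F2span G) \<Longrightarrow>
   (\<lambda>\<sigma>s. \<Sum>k\<in>I. a k * f k \<sigma>s) \<in> F2span G"
proof (induction I rule: finite_induct)
  case empty then show ?case by (simp add: F2span_zero)
next
  case (insert k I)
  have IH: "(\<lambda>\<sigma>s. \<Sum>k\<in>I. a k * f k \<sigma>s) \<in> F2span G" using insert by auto
  show ?case
  proof (cases "a k = 0")
    case True then show ?thesis using insert IH by simp
  next
    case False then have "a k = 1" by simp
    then have "(\<lambda>\<sigma>s. \<Sum>k\<in>insert k I. a k * f k \<sigma>s) = (\<lambda>\<sigma>s. f k \<sigma>s + (\<Sum>k\<in>I. a k * f k \<sigma>s))"
      using insert by simp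
    then show ?thesis using F2span_add[OF _ IH, of "f k"] insert by simp
  qed
qed

lemma F2span_sub:
  assumes z: "(\<lambda>\<sigma>s. 0) \<in> V" and a: "\<And>b1 b2. b1 \<in> V \<Longrightarrow> b2 \<in> V \<Longrightarrow> (\<lambda>\<sigma>s. b1 \<sigma>s + b2 \<sigma>s) \<in> V"
    and g: "G \<subseteq> V"
  shows "F2span G \<subseteq> V"
proof
  fix b assume "b \<in> F2span G"
  then obtain S where S: "finite S" "S \<subseteq> G" "b = (\<lambda>\<sigma>s. \<Sum>t\<in>S. t \<sigma>s)" unfolding F2span_def by blast
  have "S \<subseteq> G \<Longrightarrow> (\<lambda>\<sigma>s. \<Sum>t\<in>S. t \<sigma>s) \<in> V" using S(1)
  proof (induction S rule: finite_induct)
    case empty then show ?case using z by simp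
  next
    case (insert t S)
    then have "(\<lambda>\<sigma>s. t \<sigma>s + (\<Sum>t\<in>S. t \<sigma>s)) \<in> V" using a[of t] g by auto
    then show ?case using insert by simp
  qed
  then show "b \<in> V" using S by simp
qed



lemma lin_MultiT: "finite C \<Longrightarrow> lin C i c \<in> MultiT C i"
  unfolding lin_def MultiT_def
  apply (rule F2span_sum)
   apply (simp add: finite_W)
  apply (auto simp: W_def intro!: F2span_gen)
  done

lemma coef_add: "coef (\<lambda>\<sigma>s. b1 \<sigma>s + b2 \<sigma>s) w = coef b1 w + coef b2 w"
  by (simp add: coef_def)

lemma MultiT_lin: assumes f: "finite C" and b: "b \<in> MultiT C i" shows "b = lin C i (coef b)"
proof -
  have "MultiT C i \<subseteq> {b. b = lin C i (coef b)}"
    unfolding MultiT_def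
  proof (rule F2span_sub)
    show "(\<lambda>\<sigma>s. 0) \<in> {b. b = lin C i (coef b)}" by (simp add: lin_def coef_def)
  next
    fix b1 b2 assume "b1 \<in> {b. b = lin C i (coef b)}" "b2 \<in> {b. b = lin C i (coef b)}"
    then have e: "b1 = lin C i (coef b1)" "b2 = lin C i (coef b2)" by auto
    have "lin C i (coef (\<lambda>\<sigma>s. b1 \<sigma>s + b2 \<sigma>s)) = (\<lambda>\<sigma>s. lin C i (coef b1) \<sigma>s + lin C i (coef b2) \<sigma>s)"
      by (simp add: lin_def coef_add distrib_right sum.distrib)
    then show "(\<lambda>\<sigma>s. b1 \<sigma>s + b2 \<sigma>s) \<in> {b. b = lin C i (coef b)}" using e by simp
  next
    show "{chi_tensor hs |hs. length hs = i \<and> distinct hs \<and> set hs \<subseteq> C} \<subseteq> {b. b = lin C i (coef b)}"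
    proof -
      have "chi_tensor hs = lin C i (coef (chi_tensor hs))" if h: "length hs = i" "distinct hs" "set hs \<subseteq> C" for hs
      proof -
      have "lin C i (coef (chi_tensor hs)) = (\<lambda>\<sigma>s. \<Sum>w\<in>W C i. if hs = w then chi_tensor w \<sigma>s else 0)"
        unfolding lin_def coef_def by (intro ext sum.cong) (auto simp: chi_basis W_def h)
      also have "\<dots> = chi_tensor hs" using h finite_W[OF f] by (simp add: sum.delta W_def)
      finally show "chi_tensor hs = lin C i (coef (chi_tensor hs))" by simp
    qed
    then show ?thesis by blast
    qed
  qed
  then show ?thesis using b by blast
qed

lemma coef_zero: "finite C \<Longrightarrow> b \<in> MultiT C i \<Longrightarrow> length w = i \<Longrightarrow> w \<notin> W C i \<Longrightarrow> coef b w = 0"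
  by (metis MultiT_lin coef_lin)

lemma coef_papp: "coef (papp b j) = (\<lambda>w. coef b (j # w))"
  by (simp add: coef_def papp_def fun_eq_iff)

lemma papp_lin: assumes f: "finite C" and j: "j \<in> C"
  shows "papp (lin C (Suc i) c) j = lin (C - {j}) i (\<lambda>w. c (j # w))"
proof
  fix \<sigma>s
  have sub: "(Cons j) ` W (C - {j}) i \<subseteq> W C (Suc i)" using j by (auto simp: W_Cons)
  have "papp (lin C (Suc i) c) j \<sigma>s = (\<Sum>w\<in>W C (Suc i). c w * chi_tensor w (ebasis j # \<sigma>s))"
    by (simp add: papp_def lin_def)
  also have "\<dots> = (\<Sum>w\<in>(Cons j) ` W (C - {j}) i. c w * chi_tensor w (ebasis j # \<sigma>s))"
  proof (rule sum.mono_neutral_right[OF finite_W[OF f] sub], rule ballI)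
    fix w assume w: "w \<in> W C (Suc i) - (Cons j) ` W (C - {j}) i"
    then obtain a v where wv: "w = a # v" by (cases w) (auto simp: W_def)
    then have "a \<noteq> j" using w by (auto simp: W_Cons)
    then show "c w * chi_tensor w (ebasis j # \<sigma>s) = 0" by (simp add: wv ebasis_app)
  qed
  also have "\<dots> = (\<Sum>v\<in>W (C - {j}) i. c (j # v) * chi_tensor v \<sigma>s)"
    by (subst sum.reindex) (auto simp: ebasis_app)
  finally show "papp (lin C (Suc i) c) j \<sigma>s = lin (C - {j}) i (\<lambda>w. c (j # w)) \<sigma>s"
    by (simp add: lin_def)
qed

lemma papp_MultiT: "finite C \<Longrightarrow> j \<in> C \<Longrightarrow> b \<in> MultiT C (Suc k) \<Longrightarrow> papp b j \<in> MultiT (C - {j}) k"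
  by (metis MultiT_lin papp_lin lin_MultiT finite_Diff)

lemma L2_Cons: "2 \<le> length w \<Longrightarrow> L2 (j # w) = L2 w"
proof -
  assume "2 \<le> length w"
  then have "length (j # w) - 2 = Suc (length w - 2)" by simp
  then show ?thesis unfolding L2_def by simp
qed

lemma L2_app2: "length q = 2 \<Longrightarrow> L2 (p @ q) = set q"
  by (simp add: L2_def)

lemma L2_app3: "L2 (u @ [x, y, z]) = {y, z}"
  using L2_app2[of "[y,z]" "u @ [x]"] by simp

lemma L2_len2: "length w = 2 \<Longrightarrow> L2 w = set w"
  by (simp add: L2_def)

lemma L2_remove1:
  assumes a: "a \<in> set u" "a \<notin> L2 u" and l: "3 \<le> length u"
  shows "L2 (remove1 a u) = L2 u"
proof -
  define k where "k = length u - 2"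
  have u: "u = take k u @ drop k u" by simp
  have ld: "length (drop k u) = 2" using l by (simp add: k_def)
  have "a \<notin> set (drop k u)" using a by (simp add: L2_def k_def)
  moreover have "a \<in> set (take k u) \<union> set (drop k u)" using a(1) by (metis set_append u)
  ultimately have "a \<in> set (take k u)" by blast
  then have "remove1 a u = remove1 a (take k u) @ drop k u"
    using remove1_append[of a "take k u" "drop k u"] by simp
  then have "L2 (remove1 a u) = set (drop k u)" using L2_app2[OF ld] by simp
  also have "\<dots> = L2 u" using L2_app2[OF ld, of "take k u"] by simp
  finally show ?thesis .
qed

lemma drop_two: "length w = Suc (Suc k) \<Longrightarrow> drop k w = [w ! k, w ! Suc k]"
proof (induction w arbitrary: k)
  case Nil then show ?case by simp
next
  case (Cons a w)
  show ?case
  proof (cases k)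
    case 0 then show ?thesis using Cons.prems by (cases w) (auto simp: length_Suc_conv)
  next
    case (Suc m) then show ?thesis using Cons by simp
  qed
qed



definition Good :: "nat set \<Rightarrow> nat \<Rightarrow> (nat list \<Rightarrow> bit) \<Rightarrow> bool" where
  "Good C i c \<longleftrightarrow>
     (\<forall>w\<in>W C i. \<forall>w'\<in>W C i. set w = set w' \<longrightarrow> L2 w = L2 w' \<longrightarrow> c w = c w') \<and>
     (\<forall>u x y z. u @ [x, y, z] \<in> W C i \<longrightarrow> c (u @ [x, y, z]) + c (u @ [z, x, y]) + c (u @ [y, z, x]) = 0)"

lemma len3: "length w = 3 \<Longrightarrow> \<exists>x y z. w = [x, y, z]"
  by (auto simp: numeral_3_eq_3 length_Suc_conv)

lemma len2: "length w = 2 \<Longrightarrow> \<exists>x y. w = [x, y]"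
  by (auto simp: numeral_2_eq_2 length_Suc_conv)

lemma W_Cons3: "(j # w \<in> W C 3) \<longleftrightarrow> j \<in> C \<and> w \<in> W (C - {j}) 2"
  by (auto simp: W_def)

lemma GR3: "Good C 3 c \<longleftrightarrow>
  (\<forall>j\<in>C. Good (C - {j}) 2 (\<lambda>w. c (j # w))) \<and>
  (\<forall>x y z. [x, y, z] \<in> W C 3 \<longrightarrow> c [x, y, z] + c [z, x, y] + c [y, z, x] = 0)"
proof
  assume g: "Good C 3 c"
  have "Good (C - {j}) 2 (\<lambda>w. c (j # w))" if j: "j \<in> C" for j
    unfolding Good_def
  proof (intro conjI allI ballI impI)
    fix w w' assume w: "w \<in> W (C - {j}) 2" "w' \<in> W (C - {j}) 2" "set w = set w'" "L2 w = L2 w'"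
    then have "j # w \<in> W C 3" "j # w' \<in> W C 3" using j by (auto simp: W_Cons3)
    moreover have "L2 (j # w) = L2 w" "L2 (j # w') = L2 w'" using w by (auto simp: W_def L2_Cons)
    moreover have "set (j # w) = set (j # w')" using w by simp
    moreover have "\<forall>w\<in>W C 3. \<forall>w'\<in>W C 3. set w = set w' \<longrightarrow> L2 w = L2 w' \<longrightarrow> c w = c w'"
      using g unfolding Good_def by blast
    ultimately show "c (j # w) = c (j # w')" using w(4) by metis
  next
    fix u x y z assume "u @ [x, y, z] \<in> W (C - {j}) 2"
    then show "c (j # u @ [x, y, z]) + c (j # u @ [z, x, y]) + c (j # u @ [y, z, x]) = 0"
      by (auto simp: W_def)
  qed
  moreover have "\<forall>x y z. [x, y, z] \<in> W C 3 \<longrightarrow> c [x, y, z] + c [z, x, y] + c [y, z, x] = 0"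
    using g unfolding Good_def by (metis append_Nil)
  ultimately show "(\<forall>j\<in>C. Good (C - {j}) 2 (\<lambda>w. c (j # w))) \<and>
    (\<forall>x y z. [x, y, z] \<in> W C 3 \<longrightarrow> c [x, y, z] + c [z, x, y] + c [y, z, x] = 0)" by blast
next
  assume h: "(\<forall>j\<in>C. Good (C - {j}) 2 (\<lambda>w. c (j # w))) \<and>
    (\<forall>x y z. [x, y, z] \<in> W C 3 \<longrightarrow> c [x, y, z] + c [z, x, y] + c [y, z, x] = 0)"
  show "Good C 3 c" unfolding Good_def
  proof (intro conjI ballI allI impI)
    fix w w' assume w: "w \<in> W C 3" "w' \<in> W C 3" "set w = set w'" "L2 w = L2 w'"
    have "length w = 3" "length w' = 3" using w by (auto simp: W_def)
    then obtain x y z x' y' z' where wx: "w = [x, y, z]" and wx': "w' = [x', y', z']" using len3 by metis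
    have L: "{y, z} = {y', z'}" using w(4) by (simp add: wx wx' L2_def)
    have "x = x'" using w L by (auto simp: wx wx' W_def)
    have m: "x \<in> C" "[y, z] \<in> W (C - {x}) 2" "[y', z'] \<in> W (C - {x}) 2"
      using w \<open>x = x'\<close> by (auto simp: wx wx' W_Cons3 simp del: W_Cons)
    have "Good (C - {x}) 2 (\<lambda>w. c (x # w))" using h m by blast
    then have gg: "\<forall>w\<in>W (C - {x}) 2. \<forall>w'\<in>W (C - {x}) 2. set w = set w' \<longrightarrow> L2 w = L2 w' \<longrightarrow> c (x # w) = c (x # w')"
      unfolding Good_def by blast
    have "set [y, z] = set [y', z']" "L2 [y, z] = L2 [y', z']" using L by (auto simp: L2_def)
    then have "c (x # [y, z]) = c (x # [y', z'])" using gg m by blast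
    then show "c w = c w'" using wx wx' \<open>x = x'\<close> by simp
  next
    fix u x y z assume "u @ [x, y, z] \<in> W C 3"
    then have "u = []" by (auto simp: W_def)
    then show "c (u @ [x, y, z]) + c (u @ [z, x, y]) + c (u @ [y, z, x]) = 0"
      using h \<open>u @ [x, y, z] \<in> W C 3\<close> by simp
  qed
qed



lemma GoodD1: "Good C i c \<Longrightarrow> w \<in> W C i \<Longrightarrow> w' \<in> W C i \<Longrightarrow> set w = set w' \<Longrightarrow> L2 w = L2 w' \<Longrightarrow> c w = c w'"
  unfolding Good_def by blast

lemma GoodD2: "Good C i c \<Longrightarrow> u @ [x, y, z] \<in> W C i \<Longrightarrow> c (u @ [x, y, z]) + c (u @ [z, x, y]) + c (u @ [y, z, x]) = 0"
  unfolding Good_def by blast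

lemma W_perm: "w \<in> W C i \<Longrightarrow> length w' = i \<Longrightarrow> distinct w' \<Longrightarrow> set w' = set w \<Longrightarrow> w' \<in> W C i"
  by (auto simp: W_def)

lemma GR4:
  assumes k: "3 \<le> k"
  shows "Good C (Suc k) c \<longleftrightarrow>
  (\<forall>j\<in>C. Good (C - {j}) k (\<lambda>w. c (j # w))) \<and>
  (\<forall>j1 j2 r. j1 # j2 # r \<in> W C (Suc k) \<longrightarrow> c (j1 # j2 # r) = c (j2 # j1 # r))"
proof
  assume g: "Good C (Suc k) c"
  have "Good (C - {j}) k (\<lambda>w. c (j # w))" if j: "j \<in> C" for j
    unfolding Good_def
  proof (intro conjI allI ballI impI)
    fix w w' assume w: "w \<in> W (C - {j}) k" "w' \<in> W (C - {j}) k" "set w = set w'" "L2 w = L2 w'"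
    then have "j # w \<in> W C (Suc k)" "j # w' \<in> W C (Suc k)" using j by (auto simp: W_Cons)
    moreover have "L2 (j # w) = L2 w" "L2 (j # w') = L2 w'" using w k by (auto simp: W_def L2_Cons)
    moreover have "set (j # w) = set (j # w')" using w by simp
    ultimately show "c (j # w) = c (j # w')" using w(4) GoodD1[OF g] by metis
  next
    fix u x y z assume "u @ [x, y, z] \<in> W (C - {j}) k"
    then have "(j # u) @ [x, y, z] \<in> W C (Suc k)" using j by (simp add: W_Cons)
    from GoodD2[OF g this]
    show "c (j # u @ [x, y, z]) + c (j # u @ [z, x, y]) + c (j # u @ [y, z, x]) = 0" by simp
  qed
  moreover have "c (j1 # j2 # r) = c (j2 # j1 # r)" if r: "j1 # j2 # r \<in> W C (Suc k)" for j1 j2 r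
  proof -
    have r2: "j2 # j1 # r \<in> W C (Suc k)" using r by (auto simp: W_def)
    have lr: "2 \<le> length r" using r k by (auto simp: W_def)
    have "L2 (j1 # j2 # r) = L2 (j2 # j1 # r)" using lr by (simp add: L2_Cons)
    moreover have "set (j1 # j2 # r) = set (j2 # j1 # r)" by auto
    ultimately show ?thesis using GoodD1[OF g r r2] by blast
  qed
  ultimately show "(\<forall>j\<in>C. Good (C - {j}) k (\<lambda>w. c (j # w))) \<and>
    (\<forall>j1 j2 r. j1 # j2 # r \<in> W C (Suc k) \<longrightarrow> c (j1 # j2 # r) = c (j2 # j1 # r))" by blast
next
  assume h: "(\<forall>j\<in>C. Good (C - {j}) k (\<lambda>w. c (j # w))) \<and>
    (\<forall>j1 j2 r. j1 # j2 # r \<in> W C (Suc k) \<longrightarrow> c (j1 # j2 # r) = c (j2 # j1 # r))"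
  then have hg: "\<And>j. j \<in> C \<Longrightarrow> Good (C - {j}) k (\<lambda>w. c (j # w))"
    and hs: "\<And>j1 j2 r. j1 # j2 # r \<in> W C (Suc k) \<Longrightarrow> c (j1 # j2 # r) = c (j2 # j1 # r)" by blast+
  show "Good C (Suc k) c" unfolding Good_def
  proof (intro conjI ballI allI impI)
    fix w w' assume w: "w \<in> W C (Suc k)" "w' \<in> W C (Suc k)" "set w = set w'" "L2 w = L2 w'"
    obtain j u where wu: "w = j # u" using w by (cases w) (auto simp: W_def)
    obtain j' u' where wu': "w' = j' # u'" using w by (cases w') (auto simp: W_def)
    have ju: "j \<in> C" "u \<in> W (C - {j}) k" using w wu by (auto simp: W_Cons)
    have ju': "j' \<in> C" "u' \<in> W (C - {j'}) k" using w wu' by (auto simp: W_Cons)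
    have lu: "length u = k" "length u' = k" using ju ju' by (auto simp: W_def)
    have Lu: "L2 u = L2 u'" using w lu k by (simp add: wu wu' L2_Cons)
    show "c w = c w'"
    proof (cases "j = j'")
      case True
      have "set u = set u'" using w ju ju' True by (auto simp: wu wu' W_def)
      then show ?thesis using GoodD1[OF hg[OF ju(1)] ju(2)] ju'(2) Lu True wu wu' by simp
    next
      case False
      have j'u: "j' \<in> set u" using w False by (auto simp: wu wu')
      have j'L: "j' \<notin> L2 u" using Lu ju' by (auto simp: L2_def W_def dest: in_set_dropD)
      define r where "r = remove1 j' u"
      have du: "distinct u" "set u \<subseteq> C - {j}" using ju by (auto simp: W_def)
      have sr: "set r = set u - {j'}" using du by (simp add: r_def)
      have lr: "length r = k - 1" using j'u lu by (simp add: r_def length_remove1)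
      have Lr: "L2 r = L2 u" using L2_remove1[OF j'u j'L] lu k by (simp add: r_def)
      have dr: "distinct r" using du by (simp add: r_def)
      have m1: "j' # r \<in> W (C - {j}) k" using du dr sr lr j'u k by (auto simp: W_def)
      have e1: "c (j # u) = c (j # j' # r)"
        using GoodD1[OF hg[OF ju(1)] ju(2) m1] j'u sr lr k Lr by (auto simp: L2_Cons)
      have m2: "j # j' # r \<in> W C (Suc k)" using m1 ju by (simp add: W_Cons)
      have e2: "c (j # j' # r) = c (j' # j # r)" using hs[OF m2] .
      have m3: "j # r \<in> W (C - {j'}) k" using m2 by (auto simp: W_def)
      have s3: "set (j # r) = set u'"
      proof -
        have "set (j # r) = set w - {j'}" using sr du False by (auto simp: wu)
        also have "\<dots> = set u'" using w ju' by (auto simp: wu' W_def)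
        finally show ?thesis .
      qed
      have "L2 (j # r) = L2 u'" using lr k Lr Lu by (simp add: L2_Cons)
      then have e3: "c (j' # j # r) = c (j' # u')"
        using GoodD1[OF hg[OF ju'(1)] m3 ju'(2) s3] by simp
      show ?thesis using e1 e2 e3 wu wu' by simp
    qed
  next
    fix u x y z assume m: "u @ [x, y, z] \<in> W C (Suc k)"
    then obtain j u' where uu: "u = j # u'" using k by (cases u) (auto simp: W_def)
    have "j \<in> C" "u' @ [x, y, z] \<in> W (C - {j}) k" using m by (auto simp: uu W_Cons)
    from GoodD2[OF hg[OF this(1)] this(2)]
    show "c (u @ [x, y, z]) + c (u @ [z, x, y]) + c (u @ [y, z, x]) = 0" by (simp add: uu)
  qed
qed



lemma ConsT2: "ConsT n C 2 = {b \<in> MultiT C 2. \<forall>\<sigma>1 \<in> Vn n. \<forall>\<sigma>2 \<in> Vn n. b [\<sigma>1, \<sigma>2] = b [\<sigma>2, \<sigma>1]}"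
  by (simp add: numeral_2_eq_2)

lemma ConsT3: "ConsT n C 3 = {b \<in> MultiT C 3.
     (\<forall>j \<in> C. papp b j \<in> ConsT n (C - {j}) 2) \<and>
     (\<forall>\<sigma>1 \<in> ebasis ` {1..n}. \<forall>\<sigma>2 \<in> ebasis ` {1..n}. \<forall>\<sigma>3 \<in> ebasis ` {1..n}.
        b [\<sigma>1, \<sigma>2, \<sigma>3] + b [\<sigma>3, \<sigma>1, \<sigma>2] + b [\<sigma>2, \<sigma>3, \<sigma>1] = 0)}"
  by (simp add: numeral_3_eq_3 numeral_2_eq_2)

lemma ebasis_Vn: "j \<in> {1..n} \<Longrightarrow> ebasis j \<in> Vn n"
  by (auto simp: Vn_def ebasis_def)

lemma Good2: "Good C 2 c \<longleftrightarrow> (\<forall>y z. [y, z] \<in> W C 2 \<longrightarrow> c [y, z] = c [z, y])"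
proof
  assume g: "Good C 2 c"
  show "\<forall>y z. [y, z] \<in> W C 2 \<longrightarrow> c [y, z] = c [z, y]"
  proof (intro allI impI)
    fix y z assume m: "[y, z] \<in> W C 2"
    then have m2: "[z, y] \<in> W C 2" by (auto simp: W_def)
    show "c [y, z] = c [z, y]" using GoodD1[OF g m m2] by (auto simp: L2_len2)
  qed
next
  assume h: "\<forall>y z. [y, z] \<in> W C 2 \<longrightarrow> c [y, z] = c [z, y]"
  show "Good C 2 c" unfolding Good_def
  proof (intro conjI ballI allI impI)
    fix w w' assume w: "w \<in> W C 2" "w' \<in> W C 2" "set w = set w'" "L2 w = L2 w'"
    have "length w = 2" "length w' = 2" using w by (auto simp: W_def)
    then obtain y z y' z' where wx: "w = [y, z]" and wx': "w' = [y', z']" using len2 by metis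
    have "(y' = y \<and> z' = z) \<or> (y' = z \<and> z' = y)" using w by (auto simp: wx wx' W_def doubleton_eq_iff)
    then show "c w = c w'" using h w(1) wx wx' by auto
  next
    fix u x y z assume "u @ [x, y, z] \<in> W C 2"
    then show "c (u @ [x, y, z]) + c (u @ [z, x, y]) + c (u @ [y, z, x]) = 0" by (auto simp: W_def)
  qed
qed

lemma CC2:
  assumes f: "finite C" and Cn: "C \<subseteq> {1..n}"
  shows "ConsT n C 2 = {b \<in> MultiT C 2. Good C 2 (coef b)}"
proof (rule set_eqI, rule iffI)
  fix b assume "b \<in> ConsT n C 2"
  then have b: "b \<in> MultiT C 2" and s: "\<forall>\<sigma>1 \<in> Vn n. \<forall>\<sigma>2 \<in> Vn n. b [\<sigma>1, \<sigma>2] = b [\<sigma>2, \<sigma>1]"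
    by (auto simp: ConsT2)
  have "coef b [y, z] = coef b [z, y]" if m: "[y, z] \<in> W C 2" for y z
  proof -
    have "y \<in> {1..n}" "z \<in> {1..n}" using m Cn by (auto simp: W_def)
    then show ?thesis using s ebasis_Vn by (simp add: coef_def)
  qed
  then have "Good C 2 (coef b)" unfolding Good2 by blast
  then show "b \<in> {b \<in> MultiT C 2. Good C 2 (coef b)}" using b by simp
next
  fix b assume "b \<in> {b \<in> MultiT C 2. Good C 2 (coef b)}"
  then have b: "b \<in> MultiT C 2" and g: "Good C 2 (coef b)" by auto
  let ?c = "coef b"
  have sym: "?c [z, y] = ?c [y, z]" if "[y, z] \<in> W C 2" for y z using g that unfolding Good2 by metis
  have "b [\<sigma>1, \<sigma>2] = b [\<sigma>2, \<sigma>1]" for \<sigma>1 \<sigma>2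
  proof -
    have "b [\<sigma>2, \<sigma>1] = (\<Sum>w\<in>W C 2. ?c w * chi_tensor w [\<sigma>2, \<sigma>1])"
      by (subst MultiT_lin[OF f b]) (simp add: lin_def)
    also have "\<dots> = (\<Sum>w\<in>W C 2. ?c w * chi_tensor w [\<sigma>1, \<sigma>2])"
    proof (rule sum.reindex_bij_witness[of _ rev rev])
      fix w assume w: "w \<in> W C 2"
      then show "rev (rev w) = w" by simp
      show "rev w \<in> W C 2" using w by (auto simp: W_def)
      have "length w = 2" using w by (auto simp: W_def)
      then obtain y z where wx: "w = [y, z]" using len2 by metis
      show "?c (rev w) * chi_tensor (rev w) [\<sigma>1, \<sigma>2] = ?c w * chi_tensor w [\<sigma>2, \<sigma>1]"
        using sym[of y z] w by (simp add: wx mult.commute)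
    qed (auto simp: W_def)
    also have "\<dots> = b [\<sigma>1, \<sigma>2]"
      by (subst (2) MultiT_lin[OF f b]) (simp add: lin_def)
    finally show ?thesis by simp
  qed
  then show "b \<in> ConsT n C 2" using b by (simp add: ConsT2)
qed

lemma Cyc:
  assumes f: "finite C" and Cn: "C \<subseteq> {1..n}" and b: "b \<in> MultiT C 3"
  shows "(\<forall>\<sigma>1 \<in> ebasis ` {1..n}. \<forall>\<sigma>2 \<in> ebasis ` {1..n}. \<forall>\<sigma>3 \<in> ebasis ` {1..n}.
        b [\<sigma>1, \<sigma>2, \<sigma>3] + b [\<sigma>3, \<sigma>1, \<sigma>2] + b [\<sigma>2, \<sigma>3, \<sigma>1] = 0) \<longleftrightarrow>
     (\<forall>x y z. [x, y, z] \<in> W C 3 \<longrightarrow> coef b [x, y, z] + coef b [z, x, y] + coef b [y, z, x] = 0)"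
proof
  assume h: "\<forall>\<sigma>1 \<in> ebasis ` {1..n}. \<forall>\<sigma>2 \<in> ebasis ` {1..n}. \<forall>\<sigma>3 \<in> ebasis ` {1..n}.
        b [\<sigma>1, \<sigma>2, \<sigma>3] + b [\<sigma>3, \<sigma>1, \<sigma>2] + b [\<sigma>2, \<sigma>3, \<sigma>1] = 0"
  show "\<forall>x y z. [x, y, z] \<in> W C 3 \<longrightarrow> coef b [x, y, z] + coef b [z, x, y] + coef b [y, z, x] = 0"
  proof (intro allI impI)
    fix x y z assume "[x, y, z] \<in> W C 3"
    then have "x \<in> {1..n}" "y \<in> {1..n}" "z \<in> {1..n}" using Cn by (auto simp: W_def)
    then show "coef b [x, y, z] + coef b [z, x, y] + coef b [y, z, x] = 0"
      using h by (simp add: coef_def)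
  qed
next
  assume h: "\<forall>x y z. [x, y, z] \<in> W C 3 \<longrightarrow> coef b [x, y, z] + coef b [z, x, y] + coef b [y, z, x] = 0"
  show "\<forall>\<sigma>1 \<in> ebasis ` {1..n}. \<forall>\<sigma>2 \<in> ebasis ` {1..n}. \<forall>\<sigma>3 \<in> ebasis ` {1..n}.
        b [\<sigma>1, \<sigma>2, \<sigma>3] + b [\<sigma>3, \<sigma>1, \<sigma>2] + b [\<sigma>2, \<sigma>3, \<sigma>1] = 0"
  proof (intro ballI)
    fix \<sigma>1 \<sigma>2 \<sigma>3 assume "\<sigma>1 \<in> ebasis ` {1..n}" "\<sigma>2 \<in> ebasis ` {1..n}" "\<sigma>3 \<in> ebasis ` {1..n}"
    then obtain x y z where e: "\<sigma>1 = ebasis x" "\<sigma>2 = ebasis y" "\<sigma>3 = ebasis z" by blast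
    have ev: "b [\<sigma>1, \<sigma>2, \<sigma>3] + b [\<sigma>3, \<sigma>1, \<sigma>2] + b [\<sigma>2, \<sigma>3, \<sigma>1] =
      coef b [x, y, z] + coef b [z, x, y] + coef b [y, z, x]" by (simp add: e coef_def)
    show "b [\<sigma>1, \<sigma>2, \<sigma>3] + b [\<sigma>3, \<sigma>1, \<sigma>2] + b [\<sigma>2, \<sigma>3, \<sigma>1] = 0"
    proof (cases "[x, y, z] \<in> W C 3")
      case True then show ?thesis using h ev by simp
    next
      case False
      then have "[z, x, y] \<notin> W C 3" "[y, z, x] \<notin> W C 3" by (auto simp: W_def)
      then show ?thesis using False ev coef_zero[OF f b] by simp
    qed
  qed
qed

lemma Swap:
  assumes f: "finite C" and b: "b \<in> MultiT C (Suc (Suc m))"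
  shows "(\<forall>j1\<in>C. \<forall>j2\<in>C. j1 \<noteq> j2 \<longrightarrow> papp (papp b j1) j2 = papp (papp b j2) j1) \<longleftrightarrow>
    (\<forall>j1 j2 r. j1 # j2 # r \<in> W C (Suc (Suc m)) \<longrightarrow> coef b (j1 # j2 # r) = coef b (j2 # j1 # r))"
proof
  assume h: "\<forall>j1\<in>C. \<forall>j2\<in>C. j1 \<noteq> j2 \<longrightarrow> papp (papp b j1) j2 = papp (papp b j2) j1"
  show "\<forall>j1 j2 r. j1 # j2 # r \<in> W C (Suc (Suc m)) \<longrightarrow> coef b (j1 # j2 # r) = coef b (j2 # j1 # r)"
  proof (intro allI impI)
    fix j1 j2 r assume "j1 # j2 # r \<in> W C (Suc (Suc m))"
    then have "j1 \<in> C" "j2 \<in> C" "j1 \<noteq> j2" by (auto simp: W_def)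
    then have "papp (papp b j1) j2 (map ebasis r) = papp (papp b j2) j1 (map ebasis r)" using h by simp
    then show "coef b (j1 # j2 # r) = coef b (j2 # j1 # r)" by (simp add: coef_def papp_def)
  qed
next
  assume h: "\<forall>j1 j2 r. j1 # j2 # r \<in> W C (Suc (Suc m)) \<longrightarrow> coef b (j1 # j2 # r) = coef b (j2 # j1 # r)"
  show "\<forall>j1\<in>C. \<forall>j2\<in>C. j1 \<noteq> j2 \<longrightarrow> papp (papp b j1) j2 = papp (papp b j2) j1"
  proof (intro ballI impI)
    fix j1 j2 assume j: "j1 \<in> C" "j2 \<in> C" "j1 \<noteq> j2"
    have fc: "finite (C - {j1})" "finite (C - {j2})" using f by auto
    have "papp (papp b j1) j2 = lin (C - {j1} - {j2}) m (\<lambda>r. coef b (j1 # j2 # r))"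
      using j by (subst MultiT_lin[OF f b]) (simp add: papp_lin[OF f] papp_lin[OF fc(1)])
    also have "\<dots> = lin (C - {j2} - {j1}) m (\<lambda>r. coef b (j2 # j1 # r))"
    proof -
      have e: "C - {j1} - {j2} = C - {j2} - {j1}" by auto
      show ?thesis unfolding lin_def e
        by (intro ext sum.cong refl) (use h j in \<open>auto simp: W_def\<close>)
    qed
    also have "\<dots> = papp (papp b j2) j1"
      using j by (subst MultiT_lin[OF f b]) (simp add: papp_lin[OF f] papp_lin[OF fc(2)])
    finally show "papp (papp b j1) j2 = papp (papp b j2) j1" .
  qed
qed



lemma CC3:
  assumes f: "finite C" and Cn: "C \<subseteq> {1..n}"
  shows "ConsT n C 3 = {b \<in> MultiT C 3. Good C 3 (coef b)}"
proof -
  have key: "papp b j \<in> ConsT n (C - {j}) 2 \<longleftrightarrow> Good (C - {j}) 2 (\<lambda>w. coef b (j # w))"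
    if b: "b \<in> MultiT C 3" and j: "j \<in> C" for b j
  proof -
    have "papp b j \<in> MultiT (C - {j}) 2" using papp_MultiT[OF f j, of b 2] b by simp
    moreover have "finite (C - {j})" "C - {j} \<subseteq> {1..n}" using f Cn by auto
    ultimately show ?thesis using CC2[of "C - {j}" n] by (simp add: coef_papp)
  qed
  show ?thesis
  proof (rule set_eqI)
    fix b
    show "b \<in> ConsT n C 3 \<longleftrightarrow> b \<in> {b \<in> MultiT C 3. Good C 3 (coef b)}"
    proof (cases "b \<in> MultiT C 3")
      case True
      have "b \<in> ConsT n C 3 \<longleftrightarrow> (\<forall>j \<in> C. papp b j \<in> ConsT n (C - {j}) 2) \<and>
     (\<forall>\<sigma>1 \<in> ebasis ` {1..n}. \<forall>\<sigma>2 \<in> ebasis ` {1..n}. \<forall>\<sigma>3 \<in> ebasis ` {1..n}.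
        b [\<sigma>1, \<sigma>2, \<sigma>3] + b [\<sigma>3, \<sigma>1, \<sigma>2] + b [\<sigma>2, \<sigma>3, \<sigma>1] = 0)"
        using True by (simp add: ConsT3)
      also have "\<dots> \<longleftrightarrow> (\<forall>j \<in> C. Good (C - {j}) 2 (\<lambda>w. coef b (j # w))) \<and>
        (\<forall>x y z. [x, y, z] \<in> W C 3 \<longrightarrow> coef b [x, y, z] + coef b [z, x, y] + coef b [y, z, x] = 0)"
        using key[OF True] Cyc[OF f Cn True] by simp
      also have "\<dots> \<longleftrightarrow> Good C 3 (coef b)" by (simp add: GR3)
      finally show ?thesis using True by simp
    next
      case False then show ?thesis by (simp add: ConsT3)
    qed
  qed
qed

lemma CC4:
  assumes f: "finite C" and Cn: "C \<subseteq> {1..n}"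
    and IH: "\<And>C'. finite C' \<Longrightarrow> C' \<subseteq> {1..n} \<Longrightarrow>
       ConsT n C' (Suc (Suc (Suc k))) = {b \<in> MultiT C' (Suc (Suc (Suc k))). Good C' (Suc (Suc (Suc k))) (coef b)}"
  shows "ConsT n C (Suc (Suc (Suc (Suc k)))) = {b \<in> MultiT C (Suc (Suc (Suc (Suc k)))). Good C (Suc (Suc (Suc (Suc k)))) (coef b)}"
proof (rule set_eqI)
  fix b
  let ?i = "Suc (Suc (Suc (Suc k)))"
  show "b \<in> ConsT n C ?i \<longleftrightarrow> b \<in> {b \<in> MultiT C ?i. Good C ?i (coef b)}"
  proof (cases "b \<in> MultiT C ?i")
    case True
    have key: "papp b j \<in> ConsT n (C - {j}) (Suc (Suc (Suc k))) \<longleftrightarrow> Good (C - {j}) (Suc (Suc (Suc k))) (\<lambda>w. coef b (j # w))"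
      if j: "j \<in> C" for j
    proof -
      have "papp b j \<in> MultiT (C - {j}) (Suc (Suc (Suc k)))" using papp_MultiT[OF f j True] .
      moreover have "finite (C - {j})" "C - {j} \<subseteq> {1..n}" using f Cn by auto
      ultimately show ?thesis using IH[of "C - {j}"] by (simp add: coef_papp)
    qed
    have "b \<in> ConsT n C ?i \<longleftrightarrow> (\<forall>j \<in> C. papp b j \<in> ConsT n (C - {j}) (Suc (Suc (Suc k)))) \<and>
     (\<forall>j1 \<in> C. \<forall>j2 \<in> C. j1 \<noteq> j2 \<longrightarrow> papp (papp b j1) j2 = papp (papp b j2) j1)"
      using True by simp
    also have "\<dots> \<longleftrightarrow> (\<forall>j \<in> C. Good (C - {j}) (Suc (Suc (Suc k))) (\<lambda>w. coef b (j # w))) \<and>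
      (\<forall>j1 j2 r. j1 # j2 # r \<in> W C ?i \<longrightarrow> coef b (j1 # j2 # r) = coef b (j2 # j1 # r))"
      using key Swap[OF f True] by simp
    also have "\<dots> \<longleftrightarrow> Good C ?i (coef b)" using GR4[of "Suc (Suc (Suc k))" C "coef b"] by simp
    finally show ?thesis using True by simp
  next
    case False then show ?thesis by simp
  qed
qed

lemma CC_all:
  assumes f: "finite C" and Cn: "C \<subseteq> {1..n}" and i: "2 \<le> i"
  shows "ConsT n C i = {b \<in> MultiT C i. Good C i (coef b)}"
proof -
  have main: "\<And>C. finite C \<Longrightarrow> C \<subseteq> {1..n} \<Longrightarrow>
       ConsT n C (Suc (Suc (Suc k))) = {b \<in> MultiT C (Suc (Suc (Suc k))). Good C (Suc (Suc (Suc k))) (coef b)}" for k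
  proof (induction k)
    case 0
    have e: "(3::nat) = Suc (Suc (Suc 0))" by simp
    show ?case using CC3[of C n, unfolded e] 0 by blast
  next
    case (Suc k) show ?case by (rule CC4[OF Suc.prems Suc.IH])
  qed
  show ?thesis
  proof (cases "i = 2")
    case True then show ?thesis using CC2[OF f Cn] by simp
  next
    case False
    have "i = Suc (Suc (Suc (i - 3)))" using i False by arith
    then obtain k where k: "i = Suc (Suc (Suc k))" by blast
    show ?thesis unfolding k by (rule main[OF f Cn])
  qed
qed



definition ind :: "nat set \<Rightarrow> nat \<Rightarrow> nat list \<Rightarrow> bit" where
  "ind A x w = (if set w = A \<and> x \<in> L2 w then 1 else 0)"

lemma L2_nth: "length w = i \<Longrightarrow> 2 \<le> i \<Longrightarrow> L2 w = {w ! (i - 2), w ! (i - 1)}"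
proof -
  assume l: "length w = i" and i: "2 \<le> i"
  then have "length w = Suc (Suc (i - 2))" by simp
  from drop_two[OF this] have "drop (i - 2) w = [w ! (i - 2), w ! (i - 1)]"
    using i by (simp add: Suc_diff_Suc numeral_2_eq_2)
  then show ?thesis using l by (simp add: L2_def)
qed

lemma phi_lin:
  assumes f: "finite C" and A: "A \<subseteq> C" "card A = i" and i: "2 \<le> i" and x: "x \<in> A"
  shows "phi A x = lin C i (ind A x)"
proof
  fix \<sigma>s
  let ?H = "{hs. distinct hs \<and> set hs = A \<and> (hs ! (card A - 2) = x \<or> hs ! (card A - 1) = x)}"
  have H: "?H = {w \<in> W C i. set w = A \<and> x \<in> L2 w}"
  proof (rule set_eqI, rule iffI)
    fix w assume "w \<in> ?H"
    then have w: "distinct w" "set w = A" "w ! (i - 2) = x \<or> w ! (i - 1) = x" using A by auto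
    have l: "length w = i" using w A distinct_card by metis
    show "w \<in> {w \<in> W C i. set w = A \<and> x \<in> L2 w}" using w l A L2_nth[OF l i] by (auto simp: W_def)
  next
    fix w assume "w \<in> {w \<in> W C i. set w = A \<and> x \<in> L2 w}"
    then have w: "w \<in> W C i" "set w = A" "x \<in> L2 w" by auto
    have l: "length w = i" using w by (simp add: W_def)
    show "w \<in> ?H" using w L2_nth[OF l i] A by (auto simp: W_def)
  qed
  have "card A \<noteq> 1" using A i by simp
  then have "phi A x \<sigma>s = (\<Sum>hs\<in>?H. chi_tensor hs \<sigma>s)" by (simp add: phi_def)
  also have "\<dots> = (\<Sum>w\<in>{w \<in> W C i. set w = A \<and> x \<in> L2 w}. chi_tensor w \<sigma>s)" using H by simp
  also have "\<dots> = (\<Sum>w\<in>W C i. if set w = A \<and> x \<in> L2 w then chi_tensor w \<sigma>s else 0)"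
    using finite_W[OF f] by (simp add: sum.inter_filter)
  also have "\<dots> = lin C i (ind A x) \<sigma>s" unfolding lin_def ind_def by (intro sum.cong) auto
  finally show "phi A x \<sigma>s = lin C i (ind A x) \<sigma>s" .
qed

lemma Good_ind: "Good C i (ind A x)"
  unfolding Good_def
proof (intro conjI ballI allI impI)
  fix w w' assume "w \<in> W C i" "w' \<in> W C i" "set w = set w'" "L2 w = L2 w'"
  then show "ind A x w = ind A x w'" by (simp add: ind_def)
next
  fix u p q r assume m: "u @ [p, q, r] \<in> W C i"
  then have d: "p \<noteq> q" "q \<noteq> r" "p \<noteq> r" by (auto simp: W_def)
  have s: "set (u @ [z, p, q]) = set (u @ [p, q, r])" "set (u @ [q, r, p]) = set (u @ [p, q, r])"
    if "z = r" for z using that by auto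
  show "ind A x (u @ [p, q, r]) + ind A x (u @ [r, p, q]) + ind A x (u @ [q, r, p]) = 0"
    unfolding ind_def L2_app3 s[OF refl]
    using d by (cases "set (u @ [p, q, r]) = A"; cases "x = p"; cases "x = q"; cases "x = r") auto
qed

lemma Good_zero: "Good C i (\<lambda>w. 0)"
  unfolding Good_def by simp

lemma Good_add: "Good C i c1 \<Longrightarrow> Good C i c2 \<Longrightarrow> Good C i (\<lambda>w. c1 w + c2 w)"
proof -
  assume g1: "Good C i c1" and g2: "Good C i c2"
  show ?thesis unfolding Good_def
  proof (intro conjI ballI allI impI)
    fix w w' assume "w \<in> W C i" "w' \<in> W C i" "set w = set w'" "L2 w = L2 w'"
    then show "c1 w + c2 w = c1 w' + c2 w'" using GoodD1[OF g1] GoodD1[OF g2] by metis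
  next
    fix u x y z assume m: "u @ [x, y, z] \<in> W C i"
    have "(c1 (u @ [x, y, z]) + c2 (u @ [x, y, z])) + (c1 (u @ [z, x, y]) + c2 (u @ [z, x, y])) +
       (c1 (u @ [y, z, x]) + c2 (u @ [y, z, x])) =
       (c1 (u @ [x, y, z]) + c1 (u @ [z, x, y]) + c1 (u @ [y, z, x])) +
       (c2 (u @ [x, y, z]) + c2 (u @ [z, x, y]) + c2 (u @ [y, z, x]))" by (simp add: ac_simps)
    then show "c1 (u @ [x, y, z]) + c2 (u @ [x, y, z]) + (c1 (u @ [z, x, y]) + c2 (u @ [z, x, y])) +
       (c1 (u @ [y, z, x]) + c2 (u @ [y, z, x])) = 0"
      using GoodD2[OF g1 m] GoodD2[OF g2 m] by simp
  qed
qed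

lemma Good_cong: assumes g: "Good C i c" and e: "\<And>w. w \<in> W C i \<Longrightarrow> d w = c w"
  shows "Good C i d"
  unfolding Good_def
proof (intro conjI ballI allI impI)
  fix w w' assume w: "w \<in> W C i" "w' \<in> W C i" "set w = set w'" "L2 w = L2 w'"
  then show "d w = d w'" using GoodD1[OF g w] e[OF w(1)] e[OF w(2)] by simp
next
  fix u x y z assume m: "u @ [x, y, z] \<in> W C i"
  have m2: "u @ [z, x, y] \<in> W C i" "u @ [y, z, x] \<in> W C i" using m by (auto simp: W_def)
  show "d (u @ [x, y, z]) + d (u @ [z, x, y]) + d (u @ [y, z, x]) = 0"
    using GoodD2[OF g m] e[OF m] e[OF m2(1)] e[OF m2(2)] by simp
qed

lemma Gov_sub:
  assumes f: "finite C" and i: "2 \<le> i"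
  shows "Gov C i \<subseteq> {b \<in> MultiT C i. Good C i (coef b)}"
  unfolding Gov_def
proof (rule F2span_sub)
  show "(\<lambda>\<sigma>s. 0) \<in> {b \<in> MultiT C i. Good C i (coef b)}"
  proof -
    have "coef (\<lambda>\<sigma>s. 0) = (\<lambda>w. 0)" by (simp add: coef_def fun_eq_iff)
    then show ?thesis using F2span_zero Good_zero by (simp add: MultiT_def)
  qed
next
  fix b1 b2 assume "b1 \<in> {b \<in> MultiT C i. Good C i (coef b)}" "b2 \<in> {b \<in> MultiT C i. Good C i (coef b)}"
  then show "(\<lambda>\<sigma>s. b1 \<sigma>s + b2 \<sigma>s) \<in> {b \<in> MultiT C i. Good C i (coef b)}"
  proof -
    have "coef (\<lambda>\<sigma>s. b1 \<sigma>s + b2 \<sigma>s) = (\<lambda>w. coef b1 w + coef b2 w)" by (simp add: coef_add fun_eq_iff)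
    then show ?thesis using F2span_add Good_add \<open>b1 \<in> _\<close> \<open>b2 \<in> _\<close> by (simp add: MultiT_def)
  qed
next
  show "{phi A x |A x. A \<subseteq> C \<and> card A = i \<and> x \<in> A} \<subseteq> {b \<in> MultiT C i. Good C i (coef b)}"
  proof -
    have "phi A x \<in> MultiT C i \<and> Good C i (coef (phi A x))" if A: "A \<subseteq> C" "card A = i" "x \<in> A" for A x
    proof -
    have e: "phi A x = lin C i (ind A x)" using phi_lin[OF f A(1,2) i A(3)] .
    have "Good C i (coef (lin C i (ind A x)))"
    proof -
      have "Good C i (ind A x)" by (rule Good_ind)
      moreover have "\<And>w. w \<in> W C i \<Longrightarrow> coef (lin C i (ind A x)) w = ind A x w"
        using coef_lin[OF f] by (auto simp: W_def)
      ultimately show ?thesis by (rule Good_cong)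
    qed
    then show "phi A x \<in> MultiT C i \<and> Good C i (coef (phi A x))" using e lin_MultiT[OF f] by simp
    qed
    then show ?thesis by blast
  qed
qed



lemma bit_solve: "(X::bit) + Y + Z = 0 \<Longrightarrow> X = Y + Z"
  by (cases X; cases Y; cases Z) simp_all

lemma Good_Gov:
  assumes f: "finite C" and i: "2 \<le> i" and b: "b \<in> MultiT C i" and g: "Good C i (coef b)"
  shows "b \<in> Gov C i"
proof -
  define c where "c = coef b"
  have gc: "Good C i c" using g by (simp add: c_def)
  have bl: "b = lin C i c" unfolding c_def by (rule MultiT_lin[OF f b])
  define G where "G A P = c (SOME w. w \<in> W C i \<and> set w = A \<and> L2 w = P)" for A P
  have GP: "G (set w) (L2 w) = c w" if w: "w \<in> W C i" for w
  proof -
    have ex: "\<exists>w'. w' \<in> W C i \<and> set w' = set w \<and> L2 w' = L2 w" using w by blast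
    define w' where "w' = (SOME w'. w' \<in> W C i \<and> set w' = set w \<and> L2 w' = L2 w)"
    have "w' \<in> W C i \<and> set w' = set w \<and> L2 w' = L2 w" unfolding w'_def by (rule someI_ex[OF ex])
    then have "c w' = c w" using GoodD1[OF gc _ w] by blast
    then show ?thesis by (simp add: G_def w'_def)
  qed
  define h where "h A t = (if t = Min A then 0 else G A {Min A, t})" for A t
  define I where "I = {(A, x). A \<subseteq> C \<and> card A = i \<and> x \<in> A}"
  have fI: "finite I"
  proof -
    have "I \<subseteq> Pow C \<times> C" by (auto simp: I_def)
    then show ?thesis using f finite_subset by blast
  qed
  have key: "c w = h (set w) (w ! (i - 2)) + h (set w) (w ! (i - 1))" if w: "w \<in> W C i" for w
  proof -
    define A where "A = set w"
    define a where "a = Min A"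
    define y where "y = w ! (i - 2)"
    define z where "z = w ! (i - 1)"
    have lw: "length w = i" and dw: "distinct w" and sw: "set w \<subseteq> C" using w by (auto simp: W_def)
    have Lw: "L2 w = {y, z}" using L2_nth[OF lw i] by (simp add: y_def z_def)
    have yz: "y \<noteq> z" using dw lw i by (simp add: y_def z_def nth_eq_iff_index_eq)
    have "A \<noteq> {}" using lw i by (auto simp: A_def)
    then have aA: "a \<in> A" using a_def by (simp add: A_def)
    have cw: "c w = G A {y, z}" using GP[OF w] Lw by (simp add: A_def)
    show ?thesis
    proof (cases "y = a")
      case True
      then have "h A y = 0" "h A z = G A {a, z}" using yz by (auto simp: h_def a_def)
      then show ?thesis using cw True by (simp add: A_def y_def z_def)
    next
      case ya: False
      show ?thesis
      proof (cases "z = a")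
        case True
        then have "h A z = 0" "h A y = G A {a, y}" using yz ya by (auto simp: h_def a_def)
        then show ?thesis using cw True by (simp add: A_def y_def z_def insert_commute)
      next
        case za: False
        have hy: "h A y = G A {a, y}" using ya by (simp add: h_def a_def)
        have hz: "h A z = G A {a, z}" using za by (simp add: h_def a_def)
        define p where "p = take (i - 2) w"
        have wp: "w = p @ [y, z]"
        proof -
          have "length w = Suc (Suc (i - 2))" using lw i by simp
          from drop_two[OF this] have "drop (i - 2) w = [y, z]"
            using i by (simp add: y_def z_def Suc_diff_Suc numeral_2_eq_2)
          then show ?thesis by (metis append_take_drop_id p_def)
        qed
        have ap: "a \<in> set p" using aA ya za wp by (auto simp: A_def)
        define u where "u = remove1 a p"
        have dp: "distinct p" "y \<notin> set p" "z \<notin> set p" using dw wp by auto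
        have su: "set u = set p - {a}" using dp by (simp add: u_def)
        have lp: "length p > 0" using ap by (cases p) auto
        have lu1: "length u = length p - 1" using ap by (simp add: u_def length_remove1)
        have lp2: "length p + 2 = i" using lw wp by simp
        have lu: "length u + 3 = i" using lu1 lp2 lp by linarith
        have du: "distinct u" using dp by (simp add: u_def)
        have spw: "set p \<subseteq> set w" "y \<in> set w" "z \<in> set w" using wp by auto
        have v1: "u @ [a, y, z] \<in> W C i"
          unfolding W_def using lu du su dp ya za yz sw spw ap by auto
        have sv1: "set (u @ [a, y, z]) = A" using su wp ap by (auto simp: A_def)
        have v2: "u @ [z, a, y] \<in> W C i" "u @ [y, z, a] \<in> W C i" using v1 by (auto simp: W_def)
        have sv2: "set (u @ [z, a, y]) = A" "set (u @ [y, z, a]) = A" using sv1 by auto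
        have c1: "c (u @ [a, y, z]) = G A {y, z}" using GP[OF v1] sv1 by (simp add: L2_app3)
        have c2: "c (u @ [z, a, y]) = h A y" using GP[OF v2(1)] sv2 hy by (simp add: L2_app3)
        have c3: "c (u @ [y, z, a]) = h A z" using GP[OF v2(2)] sv2 hz by (simp add: L2_app3 insert_commute)
        have "c w + h A y + h A z = 0" using GoodD2[OF gc v1] c1 c2 c3 cw by simp
        then have "c w = h A y + h A z" by (rule bit_solve)
        then show ?thesis by (simp add: A_def y_def z_def)
      qed
    qed
  qed
  have inner: "(\<Sum>p\<in>I. h (fst p) (snd p) * ind (fst p) (snd p) w) = c w" if w: "w \<in> W C i" for w
  proof -
    have lw: "length w = i" and dw: "distinct w" and sw: "set w \<subseteq> C" using w by (auto simp: W_def)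
    define y where "y = w ! (i - 2)"
    define z where "z = w ! (i - 1)"
    have Lw: "L2 w = {y, z}" using L2_nth[OF lw i] by (simp add: y_def z_def)
    have yz: "y \<noteq> z" using dw lw i by (simp add: y_def z_def nth_eq_iff_index_eq)
    have Ls: "L2 w \<subseteq> set w" by (auto simp: L2_def dest: in_set_dropD)
    have cw: "card (set w) = i" using dw lw distinct_card by metis
    have "(\<Sum>p\<in>I. h (fst p) (snd p) * ind (fst p) (snd p) w) =
          (\<Sum>p\<in>I. if p \<in> (\<lambda>t. (set w, t)) ` L2 w then h (fst p) (snd p) else 0)"
      by (intro sum.cong refl) (auto simp: ind_def)
    also have "\<dots> = (\<Sum>p\<in>I \<inter> (\<lambda>t. (set w, t)) ` L2 w. h (fst p) (snd p))"
      using fI by (simp add: sum.inter_restrict)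
    also have "I \<inter> (\<lambda>t. (set w, t)) ` L2 w = (\<lambda>t. (set w, t)) ` L2 w"
    proof -
      have "(\<lambda>t. (set w, t)) ` L2 w \<subseteq> I" using Ls sw cw unfolding I_def by blast
      then show ?thesis by blast
    qed
    also have "(\<Sum>p\<in>(\<lambda>t. (set w, t)) ` L2 w. h (fst p) (snd p)) = (\<Sum>t\<in>L2 w. h (set w) t)"
      by (subst sum.reindex) (auto simp: inj_on_def)
    also have "\<dots> = h (set w) y + h (set w) z" using Lw yz by simp
    also have "\<dots> = c w" using key[OF w] by (simp add: y_def z_def)
    finally show ?thesis .
  qed
  have beq: "b = (\<lambda>\<sigma>s. \<Sum>p\<in>I. h (fst p) (snd p) * phi (fst p) (snd p) \<sigma>s)"
  proof
    fix \<sigma>s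
    have "(\<Sum>p\<in>I. h (fst p) (snd p) * phi (fst p) (snd p) \<sigma>s) =
          (\<Sum>p\<in>I. h (fst p) (snd p) * (\<Sum>w\<in>W C i. ind (fst p) (snd p) w * chi_tensor w \<sigma>s))"
    proof (intro sum.cong refl)
      fix p assume "p \<in> I"
      then have "fst p \<subseteq> C" "card (fst p) = i" "snd p \<in> fst p" by (auto simp: I_def)
      then show "h (fst p) (snd p) * phi (fst p) (snd p) \<sigma>s =
          h (fst p) (snd p) * (\<Sum>w\<in>W C i. ind (fst p) (snd p) w * chi_tensor w \<sigma>s)"
        using phi_lin[OF f _ _ i] by (simp add: lin_def)
    qed
    also have "\<dots> = (\<Sum>p\<in>I. \<Sum>w\<in>W C i. h (fst p) (snd p) * ind (fst p) (snd p) w * chi_tensor w \<sigma>s)"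
      by (simp add: sum_distrib_left mult.assoc)
    also have "\<dots> = (\<Sum>w\<in>W C i. \<Sum>p\<in>I. h (fst p) (snd p) * ind (fst p) (snd p) w * chi_tensor w \<sigma>s)"
      by (rule sum.swap)
    also have "\<dots> = (\<Sum>w\<in>W C i. (\<Sum>p\<in>I. h (fst p) (snd p) * ind (fst p) (snd p) w) * chi_tensor w \<sigma>s)"
      by (simp add: sum_distrib_right)
    also have "\<dots> = (\<Sum>w\<in>W C i. c w * chi_tensor w \<sigma>s)"
      by (intro sum.cong refl) (simp add: inner)
    also have "\<dots> = lin C i c \<sigma>s" by (simp add: lin_def)
    also have "\<dots> = b \<sigma>s" using bl by simp
    finally show "b \<sigma>s = (\<Sum>p\<in>I. h (fst p) (snd p) * phi (fst p) (snd p) \<sigma>s)" by simp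
  qed
  have "(\<lambda>\<sigma>s. \<Sum>p\<in>I. h (fst p) (snd p) * phi (fst p) (snd p) \<sigma>s) \<in> Gov C i"
    unfolding Gov_def
  proof (rule F2span_sum[OF fI])
    fix p assume "p \<in> I"
    then have "fst p \<subseteq> C \<and> card (fst p) = i \<and> snd p \<in> fst p" by (auto simp: I_def)
    then have "phi (fst p) (snd p) \<in> {phi A x |A x. A \<subseteq> C \<and> card A = i \<and> x \<in> A}" by blast
    then show "phi (fst p) (snd p) \<in> F2span {phi A x |A x. A \<subseteq> C \<and> card A = i \<and> x \<in> A}"
      by (rule F2span_gen)
  qed
  then show ?thesis using beq by simp
qed

lemma GC:
  assumes f: "finite C" and i: "2 \<le> i"
  shows "Gov C i = {b \<in> MultiT C i. Good C i (coef b)}"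
  using Gov_sub[OF f i] Good_Gov[OF f i] by blast

theorem proposition2p4:
  fixes n i :: nat and B :: "nat set"
  assumes "n \<ge> 1" and "i \<ge> 1" and "B \<subseteq> {1..n}"
  shows "ConsT n B i = Gov B i"
proof -
  have f: "finite B" using assms(3) finite_subset by blast
  show ?thesis
  proof (cases "i = 1")
    case True
    have "{phi A x |A x. A \<subseteq> B \<and> card A = 1 \<and> x \<in> A} = {chi_tensor [x] | x. x \<in> B}"
    proof (rule set_eqI, rule iffI)
      fix t assume "t \<in> {phi A x |A x. A \<subseteq> B \<and> card A = 1 \<and> x \<in> A}"
      then obtain A x where A: "A \<subseteq> B" "card A = 1" "x \<in> A" "t = phi A x" by blast
      then have "A = {x}" by (metis card_1_singletonE singletonD)
      then show "t \<in> {chi_tensor [x] | x. x \<in> B}" using A by (auto simp: phi_def)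
    next
      fix t assume "t \<in> {chi_tensor [x] | x. x \<in> B}"
      then obtain x where x: "x \<in> B" "t = chi_tensor [x]" by blast
      then have "t = phi {x} x" by (simp add: phi_def)
      moreover have "{x} \<subseteq> B \<and> card {x} = 1 \<and> x \<in> {x}" using x by simp
      ultimately show "t \<in> {phi A x |A x. A \<subseteq> B \<and> card A = 1 \<and> x \<in> A}" by blast
    qed
    moreover have c1: "ConsT n B 1 = F2span {chi_tensor [x] | x. x \<in> B}"
      using ConsT.simps(2)[of n B] by (simp only: One_nat_def)
    ultimately show ?thesis unfolding True Gov_def by simp
  next
    case False
    then have i: "2 \<le> i" using assms(2) by simp
    show ?thesis using CC_all[OF f assms(3) i] GC[OF f i] by simp
  qed
qed

end
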